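(* Let $Q\subset\mathrm{EX}(M)$. Then the topological boundary of $\iota_Q(M)$ in $Q(M)$ is $$\partial\iota_Q(M)=\bigcup_{(\alpha,U)\in Q}q\big(\partial_U\mathrm{ran}(\alpha)\big)=\bigcup_{(\alpha,U)\in Q}q\big(B(\alpha)\cap U\big),$$ where $\partial_U\mathrm{ran}(\alpha)$ is regarded as a subset of the component $N_{(\alpha,U)}$ of $N_Q$.
   Context: Conventions: $M$ is an $n$-dimensional smooth manifold (Hausdorff, second countable) with maximal $C^\infty$ atlas $\mathcal{A}(M)$; every chart $\alpha$ has open domain $\mathrm{dom}(\alpha)\subset M$ and open range $\mathrm{ran}(\alpha)\subset\mathbb{R}^n$. For $A\subset\mathbb{R}^n$, $\partial A$ is its boundary in $\mathbb{R}^n$; for $A\subset U\subset\mathbb{R}^n$, $\partial_U A$ is the boundary of $A$ relative to $U$. An admissible boundary point of $\alpha$ is a $p\in\partial\,\mathrm{ran}(\alpha)$ such that every sequence $(x_i)\subset\mathrm{dom}(\alpha)$ with $\alpha(x_i)\to p$ has no accumulation point in $M$; $B(\alpha)$ is the set of these. An extension is a pair $(\alpha,U)$, $U\subset\mathbb{R}^n$ open, $\mathrm{ran}(\alpha)\subset U$, $\emptyset\ne\partial_U\mathrm{ran}(\alpha)\subset B(\alpha)$; $\mathrm{EX}(M)$ is the set of extensions. A boundary set is $(\alpha,U,V)$ with $(\alpha,U)\in\mathrm{EX}(M)$, $V\subset B(\alpha)\cap U$ (a boundary point if $V=\{p\}$). $(\alpha,U,V)$ covers $(\beta,X,Y)$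 if for every sequence $(y_i)\subset\mathrm{dom}(\beta)$ with $(\beta(y_i))$ having an accumulation point in $Y$ there is a subsequence $(v_i)\subset\mathrm{dom}(\alpha)$ of $(y_i)$ with $(\alpha(v_i))$ having an accumulation point in $V$; they are equivalent, $\equiv$, if each covers the other. Completion: for $Q\subset\mathrm{EX}(M)$ let $P=\{(\alpha,\mathrm{ran}(\alpha)):\alpha\in\mathcal{A}(M)\}$, $S_Q=P\cup Q$, $N_{(\alpha,U)}=\mathrm{ran}(\alpha)\cup\partial_U\mathrm{ran}(\alpha)$ with subspace topology of $\mathbb{R}^n$, $N_Q=\bigsqcup_{(\alpha,U)\in S_Q}N_{(\alpha,U)}$ with disjoint-union topology. Identify $x\in N_{(\alpha,U)}$ with $y\in N_{(\beta,X)}$ iff either $x\in\mathrm{ran}(\alpha)$, $y\in\mathrm{ran}(\beta)$, $\beta\circ\alpha^{-1}(x)=y$, or $x\in\partial_U\mathrm{ran}(\alpha)$, $y\in\partial_X\mathrm{ran}(\beta)$, $(\alpha,U,\{x\})\equiv(\beta,X,\{y\})$. $Q(M)$ is the quotient space, $q:N_Q\to Q(M)$ the quotient map, and $\iota_Q:M\to Q(M)$, $\iota_Q(x)=q(\alpha(x))$ for any $\alpha\in\mathcal{A}(M)$ with $x\in\mathrm{dom}(\alpha)$ (with $\alpha(x)\in N_{(\alpha,\mathrm{ran}(\alpha))}$); this is independent of $\alpha$. *)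

theory Defs
  imports "HOL-Analysis.Analysis"
begin

text \<open>A real-valued function on an open set S of R^n is C-infinity iff it is continuous and all
  its partial derivatives exist on S and are again C-infinity (coinductively: partial
  derivatives of all orders exist and are continuous).\<close>

coinductive smooth_fun :: "(real^'n) set \<Rightarrow> (real^'n \<Rightarrow> real) \<Rightarrow> bool" for S where
  "continuous_on S g \<Longrightarrow>
   (\<And>i. \<exists>d. (\<forall>x\<in>S. ((\<lambda>t. g (x + t *\<^sub>R axis i 1)) has_real_derivative d x) (at 0))
            \<and> smooth_fun S d)
   \<Longrightarrow> smooth_fun S g"

definition smooth_map :: "(real^'n) set \<Rightarrow> (real^'n \<Rightarrow> real^'n) \<Rightarrow> bool" where
  "smooth_map S h \<longleftrightarrow> (\<forall>j. smooth_fun S (\<lambda>x. h x $ j))"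

type_synonym ('a,'n) chart = "'a set \<times> ('a \<Rightarrow> real^'n)"

definition cdom :: "('a,'n::finite) chart \<Rightarrow> 'a set" where "cdom c = fst c"
definition cmap :: "('a,'n::finite) chart \<Rightarrow> 'a \<Rightarrow> real^'n" where "cmap c = snd c"
definition cran :: "('a,'n::finite) chart \<Rightarrow> (real^'n) set" where "cran c = cmap c ` cdom c"

definition is_chart :: "'a topology \<Rightarrow> ('a,'n::finite) chart \<Rightarrow> bool" where
  "is_chart M c \<longleftrightarrow> openin M (cdom c) \<and> open (cran c) \<and>
     homeomorphic_map (subtopology M (cdom c)) (top_of_set (cran c)) (cmap c)"

definition transition :: "('a,'n::finite) chart \<Rightarrow> ('a,'n::finite) chart \<Rightarrow> real^'n \<Rightarrow> real^'n" where
  "transition \<alpha> \<beta> = cmap \<beta> \<circ> inv_into (cdom \<alpha>) (cmap \<alpha>)"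

definition smooth_compat :: "('a,'n::finite) chart \<Rightarrow> ('a,'n::finite) chart \<Rightarrow> bool" where
  "smooth_compat \<alpha> \<beta> \<longleftrightarrow>
     smooth_map (cmap \<alpha> ` (cdom \<alpha> \<inter> cdom \<beta>)) (transition \<alpha> \<beta>) \<and>
     smooth_map (cmap \<beta> ` (cdom \<alpha> \<inter> cdom \<beta>)) (transition \<beta> \<alpha>)"

text \<open>M (Hausdorff, second countable) with a maximal C-infinity atlas A of dimension CARD('n).\<close>
definition smooth_manifold :: "'a topology \<Rightarrow> ('a,'n::finite) chart set \<Rightarrow> bool" where
  "smooth_manifold M A \<longleftrightarrow> Hausdorff_space M \<and> second_countable M \<and>
     (\<forall>c\<in>A. is_chart M c) \<and> (\<Union>c\<in>A. cdom c) = topspace M \<and>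
     (\<forall>c\<in>A. \<forall>c'\<in>A. smooth_compat c c') \<and>
     (\<forall>c. is_chart M c \<and> (\<forall>c'\<in>A. smooth_compat c c') \<longrightarrow> c \<in> A)"

definition seq_acc_pt :: "'b topology \<Rightarrow> (nat \<Rightarrow> 'b) \<Rightarrow> 'b \<Rightarrow> bool" where
  "seq_acc_pt X x z \<longleftrightarrow> z \<in> topspace X \<and>
     (\<forall>V. openin X V \<and> z \<in> V \<longrightarrow> infinite {i. x i \<in> V})"

definition rel_bdry :: "(real^'n) set \<Rightarrow> (real^'n) set \<Rightarrow> (real^'n) set" where
  "rel_bdry U A = (top_of_set U) frontier_of A"

definition admissible_bdry :: "'a topology \<Rightarrow> ('a,'n::finite) chart \<Rightarrow> (real^'n) set" where
  "admissible_bdry M \<alpha> = {p \<in> frontier (cran \<alpha>).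
     \<forall>x. (\<forall>i. x i \<in> cdom \<alpha>) \<and> (\<lambda>i. cmap \<alpha> (x i)) \<longlonglongrightarrow> p \<longrightarrow>
         \<not> (\<exists>z. seq_acc_pt M x z)}"

type_synonym ('a,'n) ext = "('a,'n::finite) chart \<times> (real^'n) set"

definition extensions :: "'a topology \<Rightarrow> ('a,'n::finite) chart set \<Rightarrow> ('a,'n::finite) ext set" where
  "extensions M A = {(\<alpha>, U). \<alpha> \<in> A \<and> open U \<and> cran \<alpha> \<subseteq> U \<and>
      rel_bdry U (cran \<alpha>) \<noteq> {} \<and> rel_bdry U (cran \<alpha>) \<subseteq> admissible_bdry M \<alpha>}"

text \<open>(alpha,U,V) covers (beta,X,Y); U and X play no role in the definition.\<close>
definition covers :: "('a,'n::finite) chart \<Rightarrow> (real^'n) set \<Rightarrow> ('a,'n::finite) chart \<Rightarrow> (real^'n) set \<Rightarrow> bool" where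
  "covers \<alpha> V \<beta> Y \<longleftrightarrow>
     (\<forall>y. (\<forall>i. y i \<in> cdom \<beta>) \<and> (\<exists>p\<in>Y. seq_acc_pt euclidean (\<lambda>i. cmap \<beta> (y i)) p) \<longrightarrow>
        (\<exists>r. strict_mono r \<and> (\<forall>i. y (r i) \<in> cdom \<alpha>) \<and>
             (\<exists>p\<in>V. seq_acc_pt euclidean (\<lambda>i. cmap \<alpha> (y (r i))) p)))"

definition bequiv :: "('a,'n::finite) chart \<Rightarrow> (real^'n) set \<Rightarrow> ('a,'n::finite) chart \<Rightarrow> (real^'n) set \<Rightarrow> bool" where
  "bequiv \<alpha> V \<beta> Y \<longleftrightarrow> covers \<alpha> V \<beta> Y \<and> covers \<beta> Y \<alpha> V"

definition SQ :: "('a,'n::finite) chart set \<Rightarrow> ('a,'n::finite) ext set \<Rightarrow> ('a,'n::finite) ext set" where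
  "SQ A Q = {(\<alpha>, cran \<alpha>) | \<alpha>. \<alpha> \<in> A} \<union> Q"

definition Ncomp :: "('a,'n::finite) ext \<Rightarrow> (real^'n) set" where
  "Ncomp e = cran (fst e) \<union> rel_bdry (snd e) (cran (fst e))"

definition NQ :: "('a,'n::finite) chart set \<Rightarrow> ('a,'n::finite) ext set \<Rightarrow> (('a,'n::finite) ext \<times> (real^'n)) topology" where
  "NQ A Q = sum_topology (\<lambda>e. top_of_set (Ncomp e)) (SQ A Q)"

definition ident :: "('a,'n::finite) chart set \<Rightarrow> ('a,'n::finite) ext set \<Rightarrow> ((('a,'n::finite) ext \<times> (real^'n)) \<times> (('a,'n::finite) ext \<times> (real^'n))) set" where
  "ident A Q = {((e, x), (e', y)). (e, x) \<in> topspace (NQ A Q) \<and> (e', y) \<in> topspace (NQ A Q) \<and>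
     ((x \<in> cran (fst e) \<and> y \<in> cran (fst e') \<and>
        x \<in> cmap (fst e) ` (cdom (fst e) \<inter> cdom (fst e')) \<and> transition (fst e) (fst e') x = y) \<or>
      (x \<in> rel_bdry (snd e) (cran (fst e)) \<and> y \<in> rel_bdry (snd e') (cran (fst e')) \<and>
        bequiv (fst e) {x} (fst e') {y}))}"

definition identR :: "('a,'n::finite) chart set \<Rightarrow> ('a,'n::finite) ext set \<Rightarrow> ((('a,'n::finite) ext \<times> (real^'n)) \<times> (('a,'n::finite) ext \<times> (real^'n))) set" where
  "identR A Q = Id_on (topspace (NQ A Q)) \<union> (ident A Q \<union> (ident A Q)\<inverse>)\<^sup>+"

definition quotient_top :: "'b topology \<Rightarrow> ('b \<times> 'b) set \<Rightarrow> 'b set topology" where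
  "quotient_top X R = topology (\<lambda>W. W \<subseteq> topspace X // R \<and> openin X (\<Union>W))"

definition QM :: "('a,'n::finite) chart set \<Rightarrow> ('a,'n::finite) ext set \<Rightarrow> (('a,'n::finite) ext \<times> (real^'n)) set topology" where
  "QM A Q = quotient_top (NQ A Q) (identR A Q)"

definition qmap :: "('a,'n::finite) chart set \<Rightarrow> ('a,'n::finite) ext set \<Rightarrow> ('a,'n::finite) ext \<times> (real^'n) \<Rightarrow> (('a,'n::finite) ext \<times> (real^'n)) set" where
  "qmap A Q z = identR A Q `` {z}"

definition iotaQ :: "('a,'n::finite) chart set \<Rightarrow> ('a,'n::finite) ext set \<Rightarrow> 'a \<Rightarrow> (('a,'n::finite) ext \<times> (real^'n)) set" where
  "iotaQ A Q x = (let \<alpha> = (SOME \<alpha>. \<alpha> \<in> A \<and> x \<in> cdom \<alpha>) in qmap A Q ((\<alpha>, cran \<alpha>), cmap \<alpha> x))"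

end

theory Submission imports Defs begin

lemma quot_istop:
  assumes "equiv (topspace X) R"
  shows "istopology (\<lambda>W. W \<subseteq> topspace X // R \<and> openin X (\<Union>W))"
proof -
 have I: "S \<inter> T \<subseteq> topspace X // R \<and> openin X (\<Union>(S \<inter> T))" if a: "S \<subseteq> topspace X // R \<and> openin X (\<Union>S)" "T \<subseteq> topspace X // R \<and> openin X (\<Union>T)" for S T
 proof -
  have "\<Union>(S \<inter> T) = \<Union>S \<inter> \<Union>T"
  proof
    show "\<Union>S \<inter> \<Union>T \<subseteq> \<Union>(S \<inter> T)"
    proof
      fix x assume "x \<in> \<Union>S \<inter> \<Union>T"
      then obtain c d where "c \<in> S" "d \<in> T" "x \<in> c" "x \<in> d" by blast
      moreover have "c = d"
        using quotient_disj[OF assms, of c d] a \<open>c \<in> S\<close> \<open>d \<in> T\<close> \<open>x \<in> c\<close> \<open>x \<in> d\<close> by blast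
      ultimately show "x \<in> \<Union>(S \<inter> T)" by blast
    qed
  qed blast
  then show "S \<inter> T \<subseteq> topspace X // R \<and> openin X (\<Union>(S \<inter> T))" using a by auto
 qed
 have U: "\<Union>K \<subseteq> topspace X // R \<and> openin X (\<Union>(\<Union>K))" if a: "\<forall>W\<in>K. W \<subseteq> topspace X // R \<and> openin X (\<Union>W)" for K
 proof -
  have "\<Union>(\<Union>K) = \<Union>(Union ` K)" by blast
  then show "\<Union>K \<subseteq> topspace X // R \<and> openin X (\<Union>(\<Union>K))" using a by auto
 qed
 show ?thesis unfolding istopology_def using I U by blast
qed

lemma quot_open:
  assumes "equiv (topspace X) R"
  shows "openin (quotient_top X R) W \<longleftrightarrow> W \<subseteq> topspace X // R \<and> openin X (\<Union>W)"
  unfolding quotient_top_def using quot_istop[OF assms] by simp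

lemma quot_topspace:
  assumes "equiv (topspace X) R"
  shows "topspace (quotient_top X R) = topspace X // R"
proof -
  have "\<Union>(topspace X // R) = topspace X" using assms by (simp add: Union_quotient)
  hence "openin (quotient_top X R) (topspace X // R)" using quot_open[OF assms] by simp
  moreover have "\<And>W. openin (quotient_top X R) W \<Longrightarrow> W \<subseteq> topspace X // R" using quot_open[OF assms] by simp
  ultimately show ?thesis unfolding topspace_def by blast
qed

lemma identR_equiv: "equiv (topspace (NQ A Q)) (identR A Q)"
proof -
  let ?T = "topspace (NQ A Q)" let ?S = "ident A Q \<union> (ident A Q)\<inverse>"
  have sub: "?S \<subseteq> ?T \<times> ?T" unfolding ident_def by auto
  have tsub: "?S\<^sup>+ \<subseteq> ?T \<times> ?T" using sub trancl_subset_Sigma by blast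
  have sym: "sym (?S\<^sup>+)" by (simp add: sym_Un_converse sym_trancl)
  show ?thesis unfolding equiv_def identR_def refl_on_def sym_def trans_def
    using tsub sym[unfolded sym_def]
    by (auto intro: trancl_trans)
qed

lemma rb_eq: "open U \<Longrightarrow> rel_bdry U S = U \<inter> frontier S"
  unfolding rel_bdry_def
  by (simp add: frontier_of_subtopology_open euclidean_frontier_of)
lemma rb_self: "rel_bdry S S = {}"
  unfolding rel_bdry_def by (metis frontier_of_topspace topspace_euclidean_subtopology)
lemma open_front: "open S \<Longrightarrow> x \<in> frontier S \<Longrightarrow> x \<notin> S"
  by (simp add: frontier_def interior_open)

lemma SQ_props:
  assumes M: "smooth_manifold M A" and Q: "Q \<subseteq> extensions M A" and e: "e \<in> SQ A Q"
  shows "fst e \<in> A \<and> open (snd e) \<and> open (cran (fst e)) \<and> cran (fst e) \<subseteq> snd e"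
proof -
  have "e \<in> Q \<or> (\<exists>\<alpha>. \<alpha> \<in> A \<and> e = (\<alpha>, cran \<alpha>))" using e unfolding SQ_def by blast
  then show ?thesis
  proof
    assume "e \<in> Q"
    then have "fst e \<in> A \<and> open (snd e) \<and> cran (fst e) \<subseteq> snd e"
      using Q unfolding extensions_def by (cases e) auto
    moreover have "open (cran (fst e))" using M calculation unfolding smooth_manifold_def is_chart_def by blast
    ultimately show ?thesis by blast
  next
    assume "\<exists>\<alpha>. \<alpha> \<in> A \<and> e = (\<alpha>, cran \<alpha>)"
    then obtain \<alpha> where a: "\<alpha> \<in> A" "e = (\<alpha>, cran \<alpha>)" by blast
    moreover have "open (cran \<alpha>)" using M a unfolding smooth_manifold_def is_chart_def by blast
    ultimately show ?thesis by simp
  qed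
qed

lemma topNQ: "topspace (NQ A Q) = Sigma (SQ A Q) Ncomp"
  by (simp add: NQ_def o_def)

lemma ident_P:
  assumes M: "smooth_manifold M A" and Q: "Q \<subseteq> extensions M A" and zw: "(z,w) \<in> ident A Q"
  shows "(snd z \<in> cran (fst (fst z))) = (snd w \<in> cran (fst (fst w)))"
proof -
  obtain e x e' y where zz: "z = (e,x)" "w = (e',y)" by (cases z, cases w) auto
  have T: "e \<in> SQ A Q" "e' \<in> SQ A Q" using zw zz unfolding ident_def topNQ by auto
  have o1: "open (snd e)" "open (cran (fst e))" using SQ_props[OF M Q T(1)] by auto
  have o2: "open (snd e')" "open (cran (fst e'))" using SQ_props[OF M Q T(2)] by auto
  have "(x \<in> cran (fst e) \<and> y \<in> cran (fst e')) \<or>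
      (x \<in> rel_bdry (snd e) (cran (fst e)) \<and> y \<in> rel_bdry (snd e') (cran (fst e')))"
    using zw zz unfolding ident_def by auto
  then show ?thesis
    using o1 o2 rb_eq open_front zz by (metis IntD2 fst_conv snd_conv)
qed

lemma identR_P:
  assumes M: "smooth_manifold M A" and Q: "Q \<subseteq> extensions M A" and zw: "(z,w) \<in> identR A Q"
  shows "(snd z \<in> cran (fst (fst z))) = (snd w \<in> cran (fst (fst w)))"
proof -
  let ?P = "\<lambda>z. snd z \<in> cran (fst (fst z))"
  have "?P a = ?P b" if "(a,b) \<in> (ident A Q \<union> (ident A Q)\<inverse>)\<^sup>+" for a b
    using that
  proof (induction rule: trancl_induct)
    case (base y) then show ?case using ident_P[OF M Q] by blast
  next
    case (step y z) then show ?case using ident_P[OF M Q] by blast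
  qed
  moreover have "(z,w) \<in> Id_on (topspace (NQ A Q)) \<or> (z,w) \<in> (ident A Q \<union> (ident A Q)\<inverse>)\<^sup>+"
    using zw unfolding identR_def by blast
  ultimately show ?thesis by blast
qed
lemma iota_rep:
  assumes M: "smooth_manifold M A" and y: "y \<in> topspace M"
  shows "\<exists>\<beta>. \<beta> \<in> A \<and> y \<in> cdom \<beta> \<and> iotaQ A Q y = qmap A Q ((\<beta>, cran \<beta>), cmap \<beta> y)
     \<and> ((\<beta>, cran \<beta>), cmap \<beta> y) \<in> topspace (NQ A Q)"
proof -
  have ex: "\<exists>\<alpha>. \<alpha> \<in> A \<and> y \<in> cdom \<alpha>" using M y unfolding smooth_manifold_def by blast
  define \<beta> where "\<beta> = (SOME \<alpha>. \<alpha> \<in> A \<and> y \<in> cdom \<alpha>)"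
  have b: "\<beta> \<in> A" "y \<in> cdom \<beta>" using someI_ex[OF ex] unfolding \<beta>_def by auto
  have s1: "(\<beta>, cran \<beta>) \<in> SQ A Q" unfolding SQ_def using b by blast
  have s2: "cmap \<beta> y \<in> Ncomp (\<beta>, cran \<beta>)" using b by (simp add: Ncomp_def cran_def)
  have "((\<beta>, cran \<beta>), cmap \<beta> y) \<in> topspace (NQ A Q)"
    using s1 s2 unfolding topNQ by blast
  moreover have "iotaQ A Q y = qmap A Q ((\<beta>, cran \<beta>), cmap \<beta> y)"
    unfolding iotaQ_def \<beta>_def Let_def by simp
  ultimately show ?thesis using b by blast
qed

lemma class_iota:
  assumes M: "smooth_manifold M A" and Q: "Q \<subseteq> extensions M A"
    and z: "z \<in> topspace (NQ A Q)" and P: "snd z \<in> cran (fst (fst z))"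
  shows "\<exists>y\<in>topspace M. qmap A Q z = iotaQ A Q y"
proof -
  obtain e x where zz: "z = (e,x)" by (cases z) auto
  have eS: "e \<in> SQ A Q" using z zz topNQ by auto
  let ?\<alpha> = "fst e"
  have aA: "?\<alpha> \<in> A" using SQ_props[OF M Q eS] by blast
  have ch: "is_chart M ?\<alpha>" using M aA unfolding smooth_manifold_def by blast
  obtain y where y: "y \<in> cdom ?\<alpha>" "x = cmap ?\<alpha> y" using P zz unfolding cran_def by auto
  have yM: "y \<in> topspace M" using ch y openin_subset unfolding is_chart_def by blast
  have inj: "inj_on (cmap ?\<alpha>) (cdom ?\<alpha>)"
  proof -
    have "inj_on (cmap ?\<alpha>) (topspace (subtopology M (cdom ?\<alpha>)))"
      using ch homeomorphic_imp_injective_map unfolding is_chart_def by blast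
    moreover have "topspace (subtopology M (cdom ?\<alpha>)) = cdom ?\<alpha>"
      using ch openin_subset unfolding is_chart_def by (auto simp: topspace_subtopology)
    ultimately show ?thesis by simp
  qed
  obtain \<beta> where b: "\<beta> \<in> A" "y \<in> cdom \<beta>" "iotaQ A Q y = qmap A Q ((\<beta>, cran \<beta>), cmap \<beta> y)"
     "((\<beta>, cran \<beta>), cmap \<beta> y) \<in> topspace (NQ A Q)"
    using iota_rep[OF M yM] by blast
  have tr: "transition ?\<alpha> \<beta> x = cmap \<beta> y"
    unfolding transition_def using inj y by simp
  have "(z, ((\<beta>, cran \<beta>), cmap \<beta> y)) \<in> ident A Q"
    unfolding ident_def using z zz b y P tr unfolding cran_def by auto
  then have "(z, ((\<beta>, cran \<beta>), cmap \<beta> y)) \<in> identR A Q" unfolding identR_def by blast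
  then have "qmap A Q z = qmap A Q ((\<beta>, cran \<beta>), cmap \<beta> y)"
    unfolding qmap_def using equiv_class_eq[OF identR_equiv] by blast
  then show ?thesis using b yM by auto
qed
lemma part2:
  assumes Q: "Q \<subseteq> extensions M A" and e: "e \<in> Q"
  shows "rel_bdry (snd e) (cran (fst e)) = admissible_bdry M (fst e) \<inter> snd e"
proof -
  obtain \<alpha> U where eu: "e = (\<alpha>, U)" by (cases e) auto
  have x: "open U" "rel_bdry U (cran \<alpha>) \<subseteq> admissible_bdry M \<alpha>"
    using Q e eu unfolding extensions_def by auto
  have "admissible_bdry M \<alpha> \<subseteq> frontier (cran \<alpha>)" unfolding admissible_bdry_def by auto
  then show ?thesis using x rb_eq[OF x(1)] eu by auto
qed

theorem mainTheorem4:
  fixes M :: "'a topology" and A :: "('a,'n::finite) chart set" and Q :: "('a,'n) ext set"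
  assumes "smooth_manifold M A"
    and "Q \<subseteq> extensions M A"
  shows "(QM A Q) frontier_of (iotaQ A Q ` topspace M)
           = (\<Union>e\<in>Q. qmap A Q ` ({e} \<times> rel_bdry (snd e) (cran (fst e))))
       \<and> (\<Union>e\<in>Q. qmap A Q ` ({e} \<times> rel_bdry (snd e) (cran (fst e))))
           = (\<Union>e\<in>Q. qmap A Q ` ({e} \<times> (admissible_bdry M (fst e) \<inter> snd e)))"
proof
  note M = assms(1) and Q = assms(2)
  define S where "S = iotaQ A Q ` topspace M"
  define B where "B = (\<Union>e\<in>Q. qmap A Q ` ({e} \<times> rel_bdry (snd e) (cran (fst e))))"
  define T where "T = topspace (NQ A Q)"
  define R where "R = identR A Q"
  define I where "I = {z\<in>T. snd z \<in> cran (fst (fst z))}"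
  have eqv: "equiv T R" unfolding T_def R_def by (rule identR_equiv)
  have qm: "\<And>z. qmap A Q z = R `` {z}" unfolding qmap_def R_def by simp
  have RT: "R \<subseteq> T \<times> T" using eqv unfolding equiv_def refl_on_def by blast
  have top: "topspace (QM A Q) = T // R"
    unfolding QM_def T_def R_def by (rule quot_topspace[OF identR_equiv])
  have opQ: "\<And>W. openin (QM A Q) W \<longleftrightarrow> W \<subseteq> T // R \<and> openin (NQ A Q) (\<Union>W)"
    unfolding QM_def T_def R_def by (rule quot_open[OF identR_equiv])
  have refl: "\<And>z. z \<in> T \<Longrightarrow> z \<in> R `` {z}" using eqv unfolding equiv_def refl_on_def by blast
  have SI: "\<Union>S = I"
  proof
    show "\<Union>S \<subseteq> I"
    proof
      fix w assume "w \<in> \<Union>S"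
      then obtain y where y: "y \<in> topspace M" "w \<in> iotaQ A Q y" unfolding S_def by blast
      obtain \<beta> where b: "\<beta> \<in> A" "y \<in> cdom \<beta>" "iotaQ A Q y = qmap A Q ((\<beta>, cran \<beta>), cmap \<beta> y)"
        using iota_rep[OF M y(1)] by blast
      have r: "(((\<beta>, cran \<beta>), cmap \<beta> y), w) \<in> identR A Q" using y b unfolding qmap_def by simp
      have "w \<in> T" using r RT unfolding R_def by blast
      moreover have "snd w \<in> cran (fst (fst w))"
        using identR_P[OF M Q r] b(2) by (simp add: cran_def)
      ultimately show "w \<in> I" unfolding I_def by blast
    qed
  next
    show "I \<subseteq> \<Union>S"
    proof
      fix z assume z: "z \<in> I"
      then obtain y where "y \<in> topspace M" "qmap A Q z = iotaQ A Q y"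
        using class_iota[OF M Q] unfolding I_def T_def by blast
      moreover have "z \<in> qmap A Q z" using z refl qm unfolding I_def by auto
      ultimately show "z \<in> \<Union>S" unfolding S_def by blast
    qed
  qed
  have Ssub: "S \<subseteq> T // R"
  proof
    fix c assume "c \<in> S"
    then obtain y where y: "y \<in> topspace M" "c = iotaQ A Q y" unfolding S_def by blast
    then obtain \<beta> where "iotaQ A Q y = qmap A Q ((\<beta>, cran \<beta>), cmap \<beta> y)"
        "((\<beta>, cran \<beta>), cmap \<beta> y) \<in> topspace (NQ A Q)"
      using iota_rep[OF M y(1)] by blast
    then show "c \<in> T // R" using y qm T_def by (auto intro: quotientI)
  qed
  have Iopen: "openin (NQ A Q) I"
    unfolding openin_sum_topology NQ_def
  proof
    show "I \<subseteq> Sigma (SQ A Q) (topspace \<circ> (\<lambda>e. top_of_set (Ncomp e)))"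
      unfolding I_def T_def by (simp add: NQ_def o_def)
    show "\<forall>e\<in>SQ A Q. openin (top_of_set (Ncomp e)) {x. (e, x) \<in> I}"
    proof
      fix e assume e: "e \<in> SQ A Q"
      have "{x. (e, x) \<in> I} = Ncomp e \<inter> cran (fst e)"
        using e unfolding I_def T_def topNQ by auto
      moreover have "open (cran (fst e))" using SQ_props[OF M Q e] by blast
      ultimately show "openin (top_of_set (Ncomp e)) {x. (e, x) \<in> I}"
        by (simp add: openin_open_Int)
    qed
  qed
  have Sopen: "openin (QM A Q) S" using opQ Ssub SI Iopen by simp
  have Bprops: "\<And>b. b \<in> B \<Longrightarrow> \<exists>e p. e \<in> Q \<and> p \<in> rel_bdry (snd e) (cran (fst e)) \<and> (e,p) \<in> T \<and> b = R``{(e,p)}"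
  proof -
    fix b assume "b \<in> B"
    then obtain e p where ep: "e \<in> Q" "p \<in> rel_bdry (snd e) (cran (fst e))" "b = R``{(e,p)}"
      unfolding B_def using qm by auto
    have "e \<in> SQ A Q" using ep unfolding SQ_def by blast
    then have "(e,p) \<in> T" using ep unfolding T_def topNQ Ncomp_def by auto
    then show "?thesis b" using ep by blast
  qed
  have notI: "\<And>e p. e \<in> SQ A Q \<Longrightarrow> p \<in> rel_bdry (snd e) (cran (fst e)) \<Longrightarrow> p \<notin> cran (fst e)"
  proof -
    fix e p assume e: "e \<in> SQ A Q" and p: "p \<in> rel_bdry (snd e) (cran (fst e))"
    have o: "open (snd e)" "open (cran (fst e))" using SQ_props[OF M Q e] by auto
    have "p \<in> frontier (cran (fst e))" using p rb_eq[OF o(1)] by blast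
    then show "p \<notin> cran (fst e)" using open_front[OF o(2)] by blast
  qed
  have BS: "B \<inter> S = {}"
  proof (rule ccontr)
    assume "B \<inter> S \<noteq> {}"
    then obtain b where b: "b \<in> B" "b \<in> S" by blast
    obtain e p where ep: "e \<in> Q" "p \<in> rel_bdry (snd e) (cran (fst e))" "(e,p) \<in> T" "b = R``{(e,p)}"
      using Bprops[OF b(1)] by blast
    have "(e,p) \<in> \<Union>S" using b ep refl by blast
    then have "p \<in> cran (fst e)" using SI unfolding I_def by auto
    moreover have "e \<in> SQ A Q" using ep unfolding SQ_def by blast
    ultimately show False using notI ep by blast
  qed
  have TSB: "T // R \<subseteq> S \<union> B"
  proof
    fix c assume "c \<in> T // R"
    then obtain z where z: "z \<in> T" "c = R``{z}" by (auto elim: quotientE)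
    obtain e x where zz: "z = (e,x)" by (cases z) auto
    have eS: "e \<in> SQ A Q" "x \<in> Ncomp e" using z zz unfolding T_def topNQ by auto
    show "c \<in> S \<union> B"
    proof (cases "x \<in> cran (fst e)")
      case True
      have "\<exists>y\<in>topspace M. qmap A Q z = iotaQ A Q y"
        using class_iota[OF M Q, of z] True z zz unfolding T_def by simp
      then obtain y where "y \<in> topspace M" "qmap A Q z = iotaQ A Q y" by blast
      then show ?thesis using z qm unfolding S_def by auto
    next
      case False
      then have xb: "x \<in> rel_bdry (snd e) (cran (fst e))" using eS unfolding Ncomp_def by blast
      have "e \<in> Q"
      proof (rule ccontr)
        assume "e \<notin> Q"
        then obtain \<alpha> where "e = (\<alpha>, cran \<alpha>)" using eS unfolding SQ_def by blast
        then show False using xb by (simp add: rb_self)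
      qed
      have "c = qmap A Q (e,x)" using z zz qm by simp
      then have "c \<in> qmap A Q ` ({e} \<times> rel_bdry (snd e) (cran (fst e)))" using xb by blast
      then show ?thesis unfolding B_def using \<open>e \<in> Q\<close> by blast
    qed
  qed
  have BC: "B \<subseteq> (QM A Q) closure_of S"
  proof
    fix b assume bB: "b \<in> B"
    obtain e p where ep: "e \<in> Q" "p \<in> rel_bdry (snd e) (cran (fst e))" "(e,p) \<in> T" "b = R``{(e,p)}"
      using Bprops[OF bB] by blast
    have eS: "e \<in> SQ A Q" using ep unfolding SQ_def by blast
    have pcl: "p \<in> closure (cran (fst e))"
    proof -
      have o: "open (snd e)" using SQ_props[OF M Q eS] by blast
      have "p \<in> frontier (cran (fst e))" using ep(2) unfolding rb_eq[OF o] by blast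
      then show ?thesis unfolding frontier_def by blast
    qed
    show "b \<in> (QM A Q) closure_of S"
      unfolding in_closure_of
    proof (intro conjI allI impI)
      have "b \<in> T // R" using ep(3,4) by (simp add: quotientI)
      then show "b \<in> topspace (QM A Q)" using top by simp
      fix W assume bW: "b \<in> W \<and> openin (QM A Q) W"
      then have Wsub: "W \<subseteq> T // R" and Wo: "openin (NQ A Q) (\<Union>W)" using opQ[of W] by simp_all
      have "openin (top_of_set (Ncomp e)) {x. (e,x) \<in> \<Union>W}"
      proof -
        have "\<forall>i\<in>SQ A Q. openin (top_of_set (Ncomp i)) {x. (i,x) \<in> \<Union>W}"
          using Wo unfolding NQ_def openin_sum_topology by (elim conjE) assumption
        then show ?thesis using eS by blast
      qed
      then have "\<exists>V. open V \<and> {x. (e,x) \<in> \<Union>W} = Ncomp e \<inter> V" by (simp only: openin_open)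
      then obtain V where V: "open V" "{x. (e,x) \<in> \<Union>W} = Ncomp e \<inter> V"
        by (elim exE conjE) (rule that)
      have "(e,p) \<in> b" using refl ep(3,4) by blast
      then have "(e,p) \<in> \<Union>W" using bW by blast
      then have "p \<in> {x. (e,x) \<in> \<Union>W}" by simp
      then have "p \<in> V" unfolding V(2) by blast
      have "V \<inter> cran (fst e) \<noteq> {}"
        using pcl \<open>p \<in> V\<close> open_Int_closure_eq_empty[OF V(1), of "cran (fst e)"] by blast
      then obtain x where x: "x \<in> V" "x \<in> cran (fst e)" by blast
      have "x \<in> Ncomp e" using x unfolding Ncomp_def by blast
      then have "x \<in> Ncomp e \<inter> V" using x by blast
      then have "x \<in> {x. (e,x) \<in> \<Union>W}" unfolding V(2) .
      then have "(e,x) \<in> \<Union>W" by simp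
      then obtain C where C: "C \<in> W" "(e,x) \<in> C" by blast
      have xT: "(e,x) \<in> T" using eS \<open>x \<in> Ncomp e\<close> unfolding T_def topNQ by auto
      have "C \<in> T // R" using C Wsub by blast
      then obtain c where c: "c \<in> T" "C = R``{c}" by (auto elim: quotientE)
      have "(c,(e,x)) \<in> R" using C c by blast
      then have "C = R``{(e,x)}" using c equiv_class_eq[OF eqv] by blast
      moreover have "\<exists>y\<in>topspace M. qmap A Q (e,x) = iotaQ A Q y"
        using class_iota[OF M Q, of "(e,x)"] xT x unfolding T_def by simp
      then obtain y where y: "y \<in> topspace M" "qmap A Q (e,x) = iotaQ A Q y" by blast
      ultimately have "C = iotaQ A Q y" using qm by simp
      then have "C \<in> S" unfolding S_def using y by blast
      then show "\<exists>y. y \<in> S \<and> y \<in> W" using C by blast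
    qed
  qed
  have "(QM A Q) frontier_of S = (QM A Q) closure_of S - S"
    unfolding frontier_of_def using interior_of_openin[OF Sopen] by simp
  moreover have "(QM A Q) closure_of S \<subseteq> S \<union> B"
    using closure_of_subset_topspace[of "QM A Q" S] top TSB by blast
  ultimately have "(QM A Q) frontier_of S = B"
  proof -
    assume f: "(QM A Q) frontier_of S = (QM A Q) closure_of S - S"
      and c: "(QM A Q) closure_of S \<subseteq> S \<union> B"
    show ?thesis unfolding f
    proof
      show "QM A Q closure_of S - S \<subseteq> B" using c by blast
      show "B \<subseteq> QM A Q closure_of S - S" using BC BS by blast
    qed
  qed
  then show "(QM A Q) frontier_of (iotaQ A Q ` topspace M)
           = (\<Union>e\<in>Q. qmap A Q ` ({e} \<times> rel_bdry (snd e) (cran (fst e))))"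
    unfolding S_def B_def .
next
  show "(\<Union>e\<in>Q. qmap A Q ` ({e} \<times> rel_bdry (snd e) (cran (fst e))))
           = (\<Union>e\<in>Q. qmap A Q ` ({e} \<times> (admissible_bdry M (fst e) \<inter> snd e)))"
    by (rule SUP_cong) (simp_all add: part2[OF assms(2)])
qed
end
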